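(* Let $D\geq2d+2$ and $0<\delta<\Delta/3$, with the setting and standing assumptions of the context. Let $\mathcal{A}_{1,\delta}$ be the set of $c\in\mathbb{R}^{D_{\alpha}}$ such that $\|c\|<a_{0}$ and $F_{c}(\xi_{j}(c))\neq F_{c}(x_{1})$ for every $j\in\{1,\ldots,m\}$ and every $x_{1}\in K$ satisfying $\|x_{1}-\xi_{i}(c)\|\geq3\delta$ for all $i\in\{1,\ldots,m\}$. Then every point of the open ball $\{c:\|c\|<a_{0}\}$ is a Lebesgue point of $\mathcal{A}_{1,\delta}$, and therefore the probability of $\mathcal{A}_{1,\delta}$ relative to this ball is $1$.
   Context: Notation: $\pi_{i}$ is the $i$-th coordinate projection on $\mathbb{R}^{d}$, $\mathbf{e}_{1}=(1,0,\ldots,0)$; for $\alpha\in\mathbb{Z}_{\geq0}^{d}$, $p_{\alpha}(x)=\prod_i(\pi_{i}x)^{\alpha_{i}}$; $\mathcal{I}_{2D-1}$ is the set of $\alpha$ with $|\alpha|=\sum\alpha_i\leq2D-1$, of cardinality $D_{\alpha}$; $c=(c_{\alpha})\in\mathbb{R}^{D_{\alpha}}$ with Euclidean norm. $\phi:\mathbb{R}^{d}\to\mathbb{R}^{d}$ is a diffeomorphism, $\phi_{c}(x)=\phi(x)+\mathbf{e}_{1}\sum_{\alpha}c_{\alpha}p_{\alpha}(x)$, and $F_{c}(x)=(\pi_{1}x,\pi_{1}\phi_{c}(x),\ldots,\pi_{1}\phi_{c}^{D-1}(x))$. Standing assumptions: $K$ is a compact ball centered at the origin, $K^{+}\supset K$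 a larger compact ball with $\phi^{j}(x)\in K^{+}$ for $x\in K$, $0\leq j\leq D-1$; $a_{0}>0$ is such that $\phi_{c}^{j}(x)\in K^{+}$ for $x\in K$, $0\leq j\leq D-1$, $\|c\|\leq a_{0}$; and for all $\|c\|\leq a_{0}$: $\phi_{c}$ is a $C^{3}$ diffeomorphism; $\phi_{c}$ has exactly $m$ fixed points $\xi_{1}(c),\ldots,\xi_{m}(c)$ (labelled consistently in $c$); no other periodic points of period $<2D$; all fixed points hyperbolic with $\pi_{1}\xi_{i}(c)\neq\pi_{1}\xi_{j}(c)$ for $i\neq j$; $F_{c}$ immersive at each fixed point. $\Delta$ is the minimum distance between distinct fixed points of $\phi_{c}$ lying in $K$, over $\|c\|\leq a_{0}$. A point $\mathfrak{a}$ is a Lebesgue point of a measurable set $A$ if $\mu(A\cap B_{\epsilon}(\mathfrak{a}))/\mu(B_{\epsilon}(\mathfrak{a}))\to1$ as $\epsilon\to0$, where $B_\epsilon(\mathfrak a)$ is the open $\epsilon$-ball and $\mu$ Lebesgue measure; probability of $A$ relative to $B$ is $\mu(A\cap B)/\mu(B)$. *)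

theory Defs
  imports "HOL-Analysis.Analysis"
begin

text \<open>Points of R^d are vectors of type real^'n (d = CARD('n)); a coordinate index
  i1 :: 'n plays the role of the first coordinate (pi_1, e_1).
  Multi-indices alpha are functions 'n => nat.\<close>

definition multi_idx :: "nat \<Rightarrow> ('n::finite \<Rightarrow> nat) set" where
  "multi_idx D = {\<alpha>. (\<Sum>i\<in>UNIV. \<alpha> i) \<le> 2 * D - 1}"

definition monom :: "('n::finite \<Rightarrow> nat) \<Rightarrow> real^'n \<Rightarrow> real" where
  "monom \<alpha> x = (\<Prod>i\<in>UNIV. (x $ i) ^ (\<alpha> i))"

text \<open>Coefficient vectors c in R^{D_alpha}: functions on the index set I
  (extensional, i.e. elements of PiE I (%_. UNIV)), with Euclidean norm.\<close>

definition cnorm :: "'a set \<Rightarrow> ('a \<Rightarrow> real) \<Rightarrow> real" where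
  "cnorm I c = sqrt (\<Sum>\<alpha>\<in>I. (c \<alpha>)^2)"

definition cspace :: "'a set \<Rightarrow> ('a \<Rightarrow> real) set" where
  "cspace I = PiE I (\<lambda>_. UNIV)"

definition czero :: "'a set \<Rightarrow> ('a \<Rightarrow> real)" where
  "czero I = restrict (\<lambda>_. 0) I"

definition cball_open :: "'a set \<Rightarrow> ('a \<Rightarrow> real) \<Rightarrow> real \<Rightarrow> ('a \<Rightarrow> real) set" where
  "cball_open I a e = {c \<in> cspace I. cnorm I (\<lambda>\<alpha>. c \<alpha> - a \<alpha>) < e}"

text \<open>Lebesgue measure on R^{D_alpha} = R^I (completed product of Lebesgue-Borel).\<close>
definition cleb :: "'a set \<Rightarrow> ('a \<Rightarrow> real) measure" where
  "cleb I = completion (PiM I (\<lambda>_. lborel))"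

definition lebesgue_point :: "'a set \<Rightarrow> ('a \<Rightarrow> real) set \<Rightarrow> ('a \<Rightarrow> real) \<Rightarrow> bool" where
  "lebesgue_point I A a \<longleftrightarrow>
     ((\<lambda>\<epsilon>. measure (cleb I) (A \<inter> cball_open I a \<epsilon>) / measure (cleb I) (cball_open I a \<epsilon>))
        \<longlongrightarrow> 1) (at_right 0)"

definition rel_prob :: "'a set \<Rightarrow> ('a \<Rightarrow> real) set \<Rightarrow> ('a \<Rightarrow> real) set \<Rightarrow> real" where
  "rel_prob I A B = measure (cleb I) (A \<inter> B) / measure (cleb I) B"

definition phi_c :: "(real^'n \<Rightarrow> real^'n) \<Rightarrow> 'n::finite \<Rightarrow> nat \<Rightarrow> (('n \<Rightarrow> nat) \<Rightarrow> real)
                      \<Rightarrow> real^'n \<Rightarrow> real^'n" where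
  "phi_c \<phi> i1 D c x = \<phi> x + (\<Sum>\<alpha>\<in>multi_idx D. c \<alpha> * monom \<alpha> x) *\<^sub>R axis i1 1"

definition delay_map :: "(real^'n \<Rightarrow> real^'n) \<Rightarrow> 'n::finite \<Rightarrow> nat \<Rightarrow> real^'n \<Rightarrow> real list" where
  "delay_map f i1 D x = map (\<lambda>j. ((f ^^ j) x) $ i1) [0..<D]"

fun Ck :: "nat \<Rightarrow> (real^'n::finite \<Rightarrow> real) \<Rightarrow> bool" where
  "Ck 0 g = continuous_on UNIV g"
| "Ck (Suc k) g = (\<exists>dg :: 'n \<Rightarrow> real^'n \<Rightarrow> real.
       (\<forall>x. (g has_derivative (\<lambda>h. \<Sum>i\<in>UNIV. h $ i * dg i x)) (at x)) \<and> (\<forall>i. Ck k (dg i)))"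

definition Ck_map :: "nat \<Rightarrow> (real^'n::finite \<Rightarrow> real^'m::finite) \<Rightarrow> bool" where
  "Ck_map k f \<longleftrightarrow> (\<forall>i. Ck k (\<lambda>x. f x $ i))"

definition Ck_diffeo :: "nat \<Rightarrow> (real^'n::finite \<Rightarrow> real^'n) \<Rightarrow> bool" where
  "Ck_diffeo k f \<longleftrightarrow> k \<ge> 1 \<and> bij f \<and> Ck_map k f \<and> Ck_map k (inv f)"

text \<open>A fixed point p of f is hyperbolic if the derivative Df(p) has no (complex)
  eigenvalue of modulus 1.\<close>
definition hyperbolic_fp :: "(real^'n::finite \<Rightarrow> real^'n) \<Rightarrow> real^'n \<Rightarrow> bool" where
  "hyperbolic_fp f p \<longleftrightarrow> f p = p \<and> (\<exists>f'. (f has_derivative f') (at p) \<and>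
     (\<forall>z::complex. cmod z = 1 \<longrightarrow>
        det ((\<chi> i j. complex_of_real (matrix f' $ i $ j)) - mat z) \<noteq> 0))"

definition immersive_at :: "nat \<Rightarrow> (nat \<Rightarrow> real^'n::finite \<Rightarrow> real) \<Rightarrow> real^'n \<Rightarrow> bool" where
  "immersive_at D F x \<longleftrightarrow> (\<exists>G. (\<forall>j<D. (F j has_derivative G j) (at x)) \<and>
     (\<forall>v. (\<forall>j<D. G j v = 0) \<longrightarrow> v = 0))"

text \<open>Delta: minimal distance between distinct fixed points lying in K, over all
  c with norm at most a0 (as an extended real; +infinity if there are no such pairs).\<close>
definition Delta_min :: "nat set \<Rightarrow> (nat \<Rightarrow> 'c \<Rightarrow> real^'n::finite) \<Rightarrow> 'c set
                          \<Rightarrow> (real^'n) set \<Rightarrow> ereal" where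
  "Delta_min M \<xi> C K = Inf {ereal (dist (\<xi> i c) (\<xi> j c)) | i j c.
       c \<in> C \<and> i \<in> M \<and> j \<in> M \<and> \<xi> i c \<noteq> \<xi> j c \<and> \<xi> i c \<in> K \<and> \<xi> j c \<in> K}"

definition A1 :: "(real^'n \<Rightarrow> real^'n) \<Rightarrow> 'n::finite \<Rightarrow> nat \<Rightarrow> real \<Rightarrow> nat
                  \<Rightarrow> (nat \<Rightarrow> (('n \<Rightarrow> nat) \<Rightarrow> real) \<Rightarrow> real^'n) \<Rightarrow> (real^'n) set \<Rightarrow> real
                  \<Rightarrow> (('n \<Rightarrow> nat) \<Rightarrow> real) set" where
  "A1 \<phi> i1 D a0 m \<xi> K \<delta> = {c \<in> cspace (multi_idx D). cnorm (multi_idx D) c < a0 \<and>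
      (\<forall>j\<in>{1..m}. \<forall>x1\<in>K. (\<forall>i\<in>{1..m}. norm (x1 - \<xi> i c) \<ge> 3 * \<delta>) \<longrightarrow>
          delay_map (phi_c \<phi> i1 D c) i1 D (\<xi> j c) \<noteq> delay_map (phi_c \<phi> i1 D c) i1 D x1)}"

end

theory Submission
  imports Defs
begin


lemma cnorm_L2: "cnorm I c = L2_set c I"
  by (simp add: cnorm_def L2_set_def)

lemma cball_open_meas:
  assumes "finite I"
  shows "cball_open I a e \<in> sets (PiM I (\<lambda>_. lborel))"
proof -
  have "cball_open I a e = {c \<in> space (PiM I (\<lambda>_. lborel)). cnorm I (\<lambda>\<alpha>. c \<alpha> - a \<alpha>) < e}"
    by (simp add: cball_open_def cspace_def space_PiM)
  also have "\<dots> \<in> sets (PiM I (\<lambda>_. lborel))"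
    unfolding cnorm_def using assms by measurable
  finally show ?thesis .
qed

lemma cball_open_pos:
  assumes I: "finite I" "I \<noteq> {}" and e: "e > 0"
  shows "0 < measure (PiM I (\<lambda>_. lborel)) (cball_open I a e)"
proof -
  define t where "t = e / (2 * card I)"
  have cI: "card I > 0" using I by auto
  have t: "t > 0" using e cI by (simp add: t_def)
  define B where "B = PiE I (\<lambda>\<alpha>. {a \<alpha> - t <..< a \<alpha> + t})"
  define U where "U = PiE I (\<lambda>\<alpha>. {a \<alpha> - e .. a \<alpha> + e})"
  have BU: "B \<subseteq> cball_open I a e"
  proof
    fix c assume c: "c \<in> B"
    have "cnorm I (\<lambda>\<alpha>. c \<alpha> - a \<alpha>) \<le> (\<Sum>\<alpha>\<in>I. \<bar>c \<alpha> - a \<alpha>\<bar>)"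
      unfolding cnorm_L2 by (rule L2_set_le_sum_abs)
    also have "\<dots> \<le> (\<Sum>\<alpha>\<in>I. t)"
      using c by (intro sum_mono) (auto simp: B_def PiE_iff abs_le_iff)
    also have "\<dots> = e / 2" using cI by (simp add: t_def)
    also have "\<dots> < e" using e by simp
    finally show "c \<in> cball_open I a e" using c
      by (auto simp: cball_open_def cspace_def B_def PiE_iff)
  qed
  have UB: "cball_open I a e \<subseteq> U"
  proof
    fix c assume c: "c \<in> cball_open I a e"
    have "\<bar>c \<alpha> - a \<alpha>\<bar> \<le> e" if "\<alpha> \<in> I" for \<alpha>
    proof -
      have "\<bar>c \<alpha> - a \<alpha>\<bar> \<le> L2_set (\<lambda>\<alpha>. \<bar>c \<alpha> - a \<alpha>\<bar>) I"
        by (rule member_le_L2_set) (use I that in auto)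
      also have "\<dots> = cnorm I (\<lambda>\<alpha>. c \<alpha> - a \<alpha>)" by (simp add: cnorm_L2 L2_set_def)
      finally show ?thesis using c by (auto simp: cball_open_def)
    qed
    then have "a \<alpha> - e \<le> c \<alpha> \<and> c \<alpha> \<le> a \<alpha> + e" if "\<alpha> \<in> I" for \<alpha>
      using that by (simp add: abs_le_iff) (metis add.commute diff_le_eq le_diff_eq)
    then show "c \<in> U" using c by (auto simp: U_def cball_open_def cspace_def PiE_iff)
  qed
  interpret P: finite_product_sigma_finite "\<lambda>_. lborel" I
    by standard (use I in auto)
  have eB: "emeasure (PiM I (\<lambda>_. lborel)) B = (\<Prod>\<alpha>\<in>I. ennreal (2*t))"
    unfolding B_def by (subst P.emeasure_PiM) (use I t in auto)
  have eU: "emeasure (PiM I (\<lambda>_. lborel)) U = (\<Prod>\<alpha>\<in>I. ennreal (2*e))"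
    unfolding U_def by (subst P.emeasure_PiM) (use I e in auto)
  have Bm: "B \<in> sets (PiM I (\<lambda>_. lborel))" unfolding B_def by (auto intro!: sets_PiM_I_finite I)
  have Um: "U \<in> sets (PiM I (\<lambda>_. lborel))" unfolding U_def by (auto intro!: sets_PiM_I_finite I)
  have fin: "emeasure (PiM I (\<lambda>_. lborel)) (cball_open I a e) < \<infinity>"
  proof -
    have "emeasure (PiM I (\<lambda>_. lborel)) (cball_open I a e) \<le> ennreal ((2*e)^card I)"
      using emeasure_mono[OF UB Um] eU e by (simp add: ennreal_power)
    also have "\<dots> < \<infinity>" by simp
    finally show ?thesis .
  qed
  have pos: "emeasure (PiM I (\<lambda>_. lborel)) B > 0"
  proof -
    have "0 < ennreal (2*t)" using t by simp
    have "ennreal (2*t) ^ card I = ennreal ((2*t) ^ card I)"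
      by (subst ennreal_power) (use t in auto)
    then have "0 < ennreal (2*t) ^ card I" using t by simp
    then show ?thesis using eB by simp
  qed
  have "emeasure (PiM I (\<lambda>_. lborel)) (cball_open I a e) > 0"
    using emeasure_mono[OF BU cball_open_meas[OF I(1)]] pos by simp
  then show ?thesis using fin
    by (simp add: measure_def enn2real_positive_iff less_top)
qed

lemma measure_cleb_eq:
  assumes I: "finite I" and B: "B \<in> sets (PiM I (\<lambda>_. lborel))"
    and N: "N \<in> null_sets (PiM I (\<lambda>_. lborel))" and BA: "B - A \<subseteq> N"
  shows "measure (cleb I) (A \<inter> B) = measure (PiM I (\<lambda>_. lborel)) B"
proof -
  let ?M = "PiM I (\<lambda>_. lborel)"
  have N': "B - A \<in> null_sets (completion ?M)"
    using null_sets_completion_subset[OF BA null_sets_completionI[OF N]] .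
  have eq: "A \<inter> B = B - (B - A)" by auto
  have "measure (completion ?M) (B - (B - A)) = measure (completion ?M) B"
    by (rule measure_Diff_null_set) (use B N' in auto)
  then show ?thesis unfolding cleb_def eq using B by simp
qed

lemma cnorm_czero: "cnorm I (\<lambda>\<alpha>. c \<alpha> - czero I \<alpha>) = cnorm I c"
  by (simp add: cnorm_def czero_def)

lemma cnorm_tri: "cnorm I (\<lambda>\<alpha>. f \<alpha> + g \<alpha>) \<le> cnorm I f + cnorm I g"
  unfolding cnorm_L2 by (rule L2_set_triangle_ineq)

lemma conclusion_from_null:
  fixes I :: "'a set" and A N :: "('a \<Rightarrow> real) set"
  assumes I: "finite I" "I \<noteq> {}" and a0: "a0 > 0"
    and A_sub: "A \<subseteq> cball_open I (czero I) a0"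
    and bad: "cball_open I (czero I) a0 - A \<subseteq> N"
    and N: "N \<in> null_sets (PiM I (\<lambda>_. lborel))"
  shows "(\<forall>a\<in>cball_open I (czero I) a0. lebesgue_point I A a)
         \<and> rel_prob I A (cball_open I (czero I) a0) = 1"
proof
  let ?M = "PiM I (\<lambda>_. lborel)"
  let ?B0 = "cball_open I (czero I) a0"
  have key: "measure (cleb I) (A \<inter> B) / measure (cleb I) B = 1"
    if B: "B \<subseteq> ?B0" "B \<in> sets ?M" "0 < measure ?M B" for B
  proof -
    have "measure (cleb I) (A \<inter> B) = measure ?M B"
      by (rule measure_cleb_eq[OF I(1) B(2) N]) (use B bad in auto)
    moreover have "measure (cleb I) B = measure ?M B"
      unfolding cleb_def using B by simp
    ultimately show ?thesis using B by simp
  qed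
  show "rel_prob I A ?B0 = 1"
    unfolding rel_prob_def
    using key[of ?B0] cball_open_meas[OF I(1)] cball_open_pos[OF I a0] by (simp add: Int_commute)
  show "\<forall>a\<in>?B0. lebesgue_point I A a"
  proof
    fix a assume a: "a \<in> ?B0"
    define r where "r = a0 - cnorm I a"
    have r: "r > 0" using a by (simp add: r_def cball_open_def cnorm_czero)
    have sub: "cball_open I a e \<subseteq> ?B0" if "e \<le> r" for e
    proof
      fix c assume c: "c \<in> cball_open I a e"
      have "cnorm I c = cnorm I (\<lambda>\<alpha>. (c \<alpha> - a \<alpha>) + a \<alpha>)" by simp
      also have "\<dots> \<le> cnorm I (\<lambda>\<alpha>. c \<alpha> - a \<alpha>) + cnorm I a" by (rule cnorm_tri)
      also have "\<dots> < a0" using c that by (auto simp: cball_open_def r_def)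
      finally show "c \<in> ?B0" using c by (simp add: cball_open_def cnorm_czero)
    qed
    have ev: "eventually (\<lambda>e. measure (cleb I) (A \<inter> cball_open I a e) / measure (cleb I) (cball_open I a e) = 1) (at_right 0)"
      unfolding eventually_at_right_field
    proof (intro exI conjI allI impI)
      show "(0::real) < r" by (rule r)
      fix e :: real assume "0 < e" "e < r"
      then show "measure (cleb I) (A \<inter> cball_open I a e) / measure (cleb I) (cball_open I a e) = 1"
        by (intro key sub cball_open_meas cball_open_pos I) auto
    qed
    show "lebesgue_point I A a"
      unfolding lebesgue_point_def by (rule tendsto_eventually[OF ev])
  qed
qed



lemma finite_bounded_fun: "finite {\<alpha> :: 'n::finite \<Rightarrow> nat. \<forall>i. \<alpha> i \<le> k}"
proof -
  have "{\<alpha> :: 'n \<Rightarrow> nat. \<forall>i. \<alpha> i \<le> k} \<subseteq> PiE UNIV (\<lambda>_. {0..k})"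
    by (auto simp: PiE_iff)
  moreover have "finite (PiE (UNIV::'n set) (\<lambda>_. {0..k}))" by (rule finite_PiE) auto
  ultimately show ?thesis by (rule finite_subset)
qed

lemma finite_multi_idx: "finite (multi_idx D :: ('n::finite \<Rightarrow> nat) set)"
proof -
  have "multi_idx D \<subseteq> {\<alpha> :: 'n \<Rightarrow> nat. \<forall>i. \<alpha> i \<le> 2*D-1}"
  proof safe
    fix \<alpha> :: "'n \<Rightarrow> nat" and i assume "\<alpha> \<in> multi_idx D"
    then have "sum \<alpha> UNIV \<le> 2*D-1" by (simp add: multi_idx_def)
    moreover have "\<alpha> i \<le> sum \<alpha> UNIV" by (rule member_le_sum) auto
    ultimately show "\<alpha> i \<le> 2*D-1" by simp
  qed
  then show ?thesis using finite_bounded_fun finite_subset by blast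
qed

lemma zero_multi_idx: "(\<lambda>_. 0) \<in> multi_idx D"
  by (simp add: multi_idx_def)

lemma monom_add: "monom (\<lambda>i. \<alpha> i + \<beta> i) x = monom \<alpha> x * monom \<beta> x"
  by (simp add: monom_def power_add prod.distrib)

lemma monom_zero: "monom (\<lambda>_. 0) x = 1"
  by (simp add: monom_def)

lemma monom_coord: "x $ i * monom \<beta> x = monom (\<lambda>j. \<beta> j + (if j = i then 1 else 0)) x"
proof -
  have "monom (\<lambda>j. \<beta> j + (if j = i then 1 else 0)) x = monom \<beta> x * monom (\<lambda>j. if j = i then 1 else 0) x"
    by (rule monom_add)
  moreover have "monom (\<lambda>j. if j = i then 1 else 0) x = x $ i"
    unfolding monom_def
    by (simp add: power_0 prod.delta' if_distrib[of "\<lambda>n. x $ _ ^ n"] cong: if_cong)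
  ultimately show ?thesis by simp
qed

definition evalv :: "('m::finite \<Rightarrow> real^'n::finite) \<Rightarrow> (real^'n \<Rightarrow> real) \<Rightarrow> real^'m" where
  "evalv z q = (\<chi> r. q (z r))"

lemma evalv_add: "evalv z (\<lambda>x. f x + g x) = evalv z f + evalv z g"
  by (simp add: evalv_def vec_eq_iff)
lemma evalv_diff: "evalv z (\<lambda>x. f x - g x) = evalv z f - evalv z g"
  by (simp add: evalv_def vec_eq_iff)
lemma evalv_scale: "evalv z (\<lambda>x. a * f x) = a *\<^sub>R evalv z f"
  by (simp add: evalv_def vec_eq_iff)
lemma evalv_sum: "evalv z (\<lambda>x. \<Sum>i\<in>F. f i x) = (\<Sum>i\<in>F. evalv z (f i))"
  by (induction F rule: infinite_finite_induct) (auto simp: evalv_def vec_eq_iff)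

definition Qpoly :: "nat \<Rightarrow> ('m::finite \<Rightarrow> real^'n::finite) \<Rightarrow> nat \<Rightarrow> (real^'n \<Rightarrow> real) \<Rightarrow> bool" where
  "Qpoly D z k q \<longleftrightarrow> (\<forall>\<beta>. sum \<beta> UNIV + k \<le> 2*D-1 \<longrightarrow>
      evalv z (\<lambda>x. q x * monom \<beta> x) \<in> span ((\<lambda>\<alpha>. evalv z (monom \<alpha>)) ` multi_idx D))"

lemma Qpoly_one: "Qpoly D z 0 (\<lambda>_. 1)"
  unfolding Qpoly_def by (auto intro!: span_base simp: multi_idx_def)

lemma Qpoly_mult_coord:
  assumes "Qpoly D z k q"
  shows "Qpoly D z (Suc k) (\<lambda>x. q x * x $ i)"
  unfolding Qpoly_def
proof safe
  fix \<beta> :: "'b \<Rightarrow> nat" assume b: "sum \<beta> UNIV + Suc k \<le> 2 * D - 1"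
  define \<gamma> where "\<gamma> = (\<lambda>j. \<beta> j + (if j = i then 1 else 0))"
  have "sum \<gamma> UNIV = sum \<beta> UNIV + 1"
    by (simp add: \<gamma>_def sum.distrib)
  then have "sum \<gamma> UNIV + k \<le> 2*D-1" using b by simp
  then have "evalv z (\<lambda>x. q x * monom \<gamma> x) \<in> span ((\<lambda>\<alpha>. evalv z (monom \<alpha>)) ` multi_idx D)"
    using assms by (simp add: Qpoly_def)
  moreover have "(\<lambda>x. q x * x $ i * monom \<beta> x) = (\<lambda>x. q x * monom \<gamma> x)"
    by (simp add: \<gamma>_def monom_coord mult.assoc)
  ultimately show "evalv z (\<lambda>x. q x * x $ i * monom \<beta> x) \<in> span ((\<lambda>\<alpha>. evalv z (monom \<alpha>)) ` multi_idx D)"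
    by simp
qed

lemma Qpoly_mono:
  assumes "Qpoly D z k q" "k' \<ge> k"
  shows "Qpoly D z k' q"
  using assms unfolding Qpoly_def by auto

lemma Qpoly_mult_affine:
  assumes "Qpoly D z k q"
  shows "Qpoly D z (Suc k) (\<lambda>x. q x * (\<Sum>i\<in>UNIV. b $ i * (x $ i - w $ i)))"
  unfolding Qpoly_def
proof safe
  fix \<beta> :: "'b \<Rightarrow> nat" assume b: "sum \<beta> UNIV + Suc k \<le> 2 * D - 1"
  let ?S = "span ((\<lambda>\<alpha>. evalv z (monom \<alpha>)) ` multi_idx D)"
  have e: "(\<lambda>x. q x * (\<Sum>i\<in>UNIV. b $ i * (x $ i - w $ i)) * monom \<beta> x)
      = (\<lambda>x. \<Sum>i\<in>UNIV. b $ i * (q x * x $ i * monom \<beta> x) - (b $ i * w $ i) * (q x * monom \<beta> x))"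
    by (rule ext) (simp add: sum_distrib_left sum_distrib_right algebra_simps)
  have 1: "evalv z (\<lambda>x. q x * x $ i * monom \<beta> x) \<in> ?S" for i
    using Qpoly_mult_coord[OF assms, of i] b unfolding Qpoly_def by auto
  have 2: "evalv z (\<lambda>x. q x * monom \<beta> x) \<in> ?S"
    using assms b unfolding Qpoly_def by auto
  show "evalv z (\<lambda>x. q x * (\<Sum>i\<in>UNIV. b $ i * (x $ i - w $ i)) * monom \<beta> x) \<in> ?S"
    unfolding e evalv_sum evalv_diff evalv_scale
    by (intro span_sum span_diff span_scale 1 2)
qed

lemma interp_span:
  fixes z :: "'m::finite \<Rightarrow> real^'n::finite"
  assumes inj: "inj z" and deg: "CARD('m) - 1 \<le> 2*D - 1"
  shows "span ((\<lambda>\<alpha>. evalv z (monom \<alpha>)) ` multi_idx D) = UNIV"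
proof -
  let ?S = "span ((\<lambda>\<alpha>. evalv z (monom \<alpha>)) ` multi_idx D)"
  define l where "l r0 r x = (\<Sum>i\<in>UNIV. (z r0 - z r) $ i * (x $ i - z r $ i))" for r0 r and x :: "real^'n"
  have axis_in: "axis r0 1 \<in> ?S" for r0
  proof -
    define P where "P F x = (\<Prod>r\<in>F. l r0 r x)" for F x
    have QP: "Qpoly D z (card F) (P F)" if "finite F" for F
      using that
    proof (induction F rule: finite_induct)
      case empty
      then show ?case using Qpoly_one by (simp add: P_def)
    next
      case (insert r F)
      have "Qpoly D z (Suc (card F)) (\<lambda>x. P F x * l r0 r x)"
        unfolding l_def by (rule Qpoly_mult_affine[OF insert.IH])
      moreover have "(\<lambda>x. P F x * l r0 r x) = P (insert r F)"
        using insert by (simp add: P_def fun_eq_iff mult.commute)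
      ultimately show ?case using insert by simp
    qed
    define F where "F = UNIV - {r0}"
    have cF: "card F = CARD('m) - 1" by (simp add: F_def card_Diff_singleton)
    have "evalv z (\<lambda>x. P F x * monom (\<lambda>_. 0) x) \<in> ?S"
      using QP[of F] cF deg unfolding Qpoly_def by (auto simp: F_def)
    then have inS: "evalv z (P F) \<in> ?S" by (simp add: monom_zero)
    have lz: "l r0 r (z r) = 0" for r by (simp add: l_def)
    have lpos: "l r0 r (z r0) \<noteq> 0" if "r \<noteq> r0" for r
    proof -
      have "l r0 r (z r0) = (z r0 - z r) \<bullet> (z r0 - z r)"
        by (simp add: l_def inner_vec_def)
      moreover have "z r0 - z r \<noteq> 0" using inj that by (auto dest: injD)
      ultimately show ?thesis by simp
    qed
    have c0: "P F (z r0) \<noteq> 0"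
      unfolding P_def using lpos by (simp add: F_def)
    have "evalv z (P F) = P F (z r0) *\<^sub>R axis r0 1"
    proof (unfold vec_eq_iff, intro allI)
      fix r
      show "evalv z (P F) $ r = (P F (z r0) *\<^sub>R axis r0 1) $ r"
      proof (cases "r = r0")
        case True then show ?thesis by (simp add: evalv_def axis_def)
      next
        case False
        then have "r \<in> F" by (simp add: F_def)
        then have "P F (z r) = 0" unfolding P_def using lz
          by (intro prod_zero) auto
        then show ?thesis using False by (simp add: evalv_def axis_def)
      qed
    qed
    then have "axis r0 1 = inverse (P F (z r0)) *\<^sub>R evalv z (P F)" using c0 by simp
    then show ?thesis using span_scale[OF inS] by metis
  qed
  have "Basis \<subseteq> ?S" using axis_in by (auto simp: Basis_vec_def)
  then have "span Basis \<subseteq> ?S" by (rule span_minimal) simp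
  then show ?thesis by auto
qed

lemma interp_det:
  fixes z :: "'m::finite \<Rightarrow> real^'n::finite"
  assumes inj: "inj z" and deg: "CARD('m) - 1 \<le> 2*D - 1"
  shows "\<exists>\<beta> :: 'm \<Rightarrow> ('n \<Rightarrow> nat). inj \<beta> \<and> range \<beta> \<subseteq> multi_idx D \<and>
           det (\<chi> r col. monom (\<beta> col) (z r) :: real^'m^'m) \<noteq> 0"
proof -
  let ?V = "(\<lambda>\<alpha>. evalv z (monom \<alpha>)) ` multi_idx D"
  obtain B where B: "B \<subseteq> ?V" "independent B" "?V \<subseteq> span B"
    using maximal_independent_subset[of ?V] by blast
  have spB: "span B = UNIV"
  proof -
    have "span ?V \<subseteq> span B" using B(3) by (simp add: span_minimal)
    then show ?thesis using interp_span[OF inj deg] by auto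
  qed
  have finB: "finite B" using B(2) by (rule independent_imp_finite)
  have cB: "card B = CARD('m)"
  proof -
    have "dim (span B) = card B" by (rule dim_span_eq_card_independent[OF B(2)])
    then show ?thesis using spB by simp
  qed
  obtain J where J: "J \<subseteq> multi_idx D" "inj_on (\<lambda>\<alpha>. evalv z (monom \<alpha>)) J"
      "B = (\<lambda>\<alpha>. evalv z (monom \<alpha>)) ` J"
    using B(1) subset_image_inj by metis
  have finJ: "finite J" using J(1) finite_multi_idx finite_subset by blast
  have cJ: "card J = CARD('m)" using J cB card_image by metis
  obtain \<beta> where bb: "bij_betw \<beta> (UNIV::'m set) J"
    using finite_same_card_bij[of "UNIV::'m set" J] finJ cJ by auto
  have inj\<beta>: "inj \<beta>" using bb by (simp add: bij_betw_def)
  have rng: "range \<beta> = J" using bb by (simp add: bij_betw_def)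
  define A where "A = (\<chi> r col. monom (\<beta> col) (z r) :: real^'m^'m)"
  have col: "column col A = evalv z (monom (\<beta> col))" for col
    by (simp add: A_def column_def evalv_def)
  have "columns A = B"
    unfolding columns_def col J(3) rng[symmetric] by auto
  then have "vec.span (columns A) = UNIV" using spB by (simp add: span_vec_eq)
  then obtain C :: "real^'m^'m" where "A ** C = mat 1"
    using matrix_right_invertible_span_columns by blast
  then have "invertible A" unfolding invertible_right_inverse by blast
  then have "det A \<noteq> 0" by (simp add: invertible_det_nz)
  then show ?thesis using inj\<beta> rng J(1) unfolding A_def by blast
qed



lemma Basis_vec_range: "(Basis :: (real^'m::finite) set) = range (\<lambda>k. axis k 1)"
  by (auto simp: Basis_vec_def)

lemma inj_axis1: "inj (\<lambda>k::'m::finite. axis k (1::real))"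
  by (auto simp: inj_def axis_eq_axis)

lemma lborel_vec_prod:
  fixes B :: "'m::finite \<Rightarrow> real set"
  assumes B: "\<And>k. B k \<in> sets borel"
  shows "emeasure lborel {v::real^'m. \<forall>k. v $ k \<in> B k} = (\<Prod>k\<in>UNIV. emeasure lborel (B k))"
proof -
  define idx where "idx b = (SOME k. b = axis k (1::real))" for b :: "real^'m"
  have idx: "idx (axis k 1) = k" for k
    unfolding idx_def by (rule some_equality) (auto simp: axis_eq_axis)
  define f where "f b = (indicator (B (idx b)) :: real \<Rightarrow> ennreal)" for b
  have fm: "f b \<in> borel_measurable borel" for b
    unfolding f_def using B by measurable
  have ind: "indicator {v::real^'m. \<forall>k. v $ k \<in> B k} x = (\<Prod>b\<in>Basis. f b (x \<bullet> b))" for x :: "real^'m"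
  proof -
    have "(\<Prod>b\<in>Basis. f b (x \<bullet> b)) = (\<Prod>k\<in>UNIV. f (axis k 1) (x \<bullet> axis k 1))"
      unfolding Basis_vec_range by (rule prod.reindex[OF inj_axis1, unfolded comp_def])
    also have "\<dots> = (\<Prod>k\<in>UNIV. indicator (B k) (x $ k))"
      by (simp add: f_def idx inner_axis)
    also have "\<dots> = indicator {v::real^'m. \<forall>k. v $ k \<in> B k} x"
      by (auto simp: indicator_def)
    finally show ?thesis by simp
  qed
  have meas: "{v::real^'m. \<forall>k. v $ k \<in> B k} \<in> sets lborel"
  proof -
    have "{v::real^'m. \<forall>k. v $ k \<in> B k} = (\<Inter>k. (\<lambda>v. v $ k) -` B k)" by auto
    also have "\<dots> \<in> sets borel"
      using B by (intro sets.countable_INT) (auto intro!: measurable_sets_borel[OF borel_measurable_continuous_onI] continuous_intros)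
    finally show ?thesis by simp
  qed
  have "emeasure lborel {v::real^'m. \<forall>k. v $ k \<in> B k} = (\<integral>\<^sup>+x. (\<Prod>b\<in>Basis. f b (x \<bullet> b)) \<partial>lborel)"
    using meas by (simp add: ind[symmetric])
  also have "\<dots> = (\<Prod>b\<in>Basis. (\<integral>\<^sup>+x. f b x \<partial>lborel))"
    by (rule nn_integral_lborel_prod) (auto simp: fm)
  also have "\<dots> = (\<Prod>k\<in>UNIV. (\<integral>\<^sup>+x. f (axis k 1) x \<partial>lborel))"
    unfolding Basis_vec_range by (rule prod.reindex[OF inj_axis1, unfolded comp_def])
  also have "\<dots> = (\<Prod>k\<in>UNIV. emeasure lborel (B k))"
    using B by (simp add: f_def idx)
  finally show ?thesis .
qed

lemma distr_T:
  fixes \<beta> :: "'m::finite \<Rightarrow> 'a"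
  assumes inj: "inj \<beta>"
  shows "distr lborel (PiM (range \<beta>) (\<lambda>_. lborel)) (\<lambda>v::real^'m. \<lambda>\<alpha>\<in>range \<beta>. v $ inv \<beta> \<alpha>)
           = PiM (range \<beta>) (\<lambda>_. lborel)"
    (is "distr lborel ?P ?T = ?P")
proof -
  interpret product_sigma_finite "\<lambda>_. lborel :: real measure" by standard
  have Tm: "?T \<in> measurable lborel ?P"
    by (intro measurable_restrict) (auto intro!: borel_measurable_continuous_onI continuous_intros)
  show ?thesis
  proof (rule PiM_eqI)
    show "finite (range \<beta>)" by simp
    show "sets (distr lborel ?P ?T) = sets ?P" by simp
    fix A :: "'a \<Rightarrow> real set" assume A: "\<And>i. i \<in> range \<beta> \<Longrightarrow> A i \<in> sets lborel"
    have pre: "?T -` PiE (range \<beta>) A \<inter> space lborel = {v. \<forall>k. v $ k \<in> A (\<beta> k)}"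
      using inj by (auto simp: PiE_iff inv_f_f)
    have "emeasure (distr lborel ?P ?T) (PiE (range \<beta>) A) = emeasure lborel (?T -` PiE (range \<beta>) A \<inter> space lborel)"
      by (rule emeasure_distr[OF Tm]) (use A in \<open>auto intro!: sets_PiM_I_finite\<close>)
    also have "\<dots> = (\<Prod>k\<in>UNIV. emeasure lborel (A (\<beta> k)))"
      unfolding pre by (rule lborel_vec_prod) (use A in auto)
    also have "\<dots> = (\<Prod>\<alpha>\<in>range \<beta>. emeasure lborel (A \<alpha>))"
      by (rule prod.reindex[OF inj, unfolded comp_def, symmetric])
    finally show "emeasure (distr lborel ?P ?T) (PiE (range \<beta>) A) = (\<Prod>\<alpha>\<in>range \<beta>. emeasure lborel (A \<alpha>))" .
  qed
qed

lemma differentiable_prod':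
  fixes f :: "'i \<Rightarrow> 'a::real_normed_vector \<Rightarrow> real"
  assumes "\<And>i. i \<in> S \<Longrightarrow> f i differentiable (at x)"
  shows "(\<lambda>y. \<Prod>i\<in>S. f i y) differentiable (at x)"
  using assms
proof (induction S rule: infinite_finite_induct)
  case (insert i S)
  then show ?case by (simp add: differentiable_mult)
qed auto

lemma vec_as_sum: "(\<chi> k. f k) = (\<Sum>k\<in>UNIV. f k *\<^sub>R axis k (1::real))"
  by (simp add: vec_eq_iff axis_def if_distrib cong: if_cong)

lemma differentiable_vec:
  fixes f :: "'m::finite \<Rightarrow> 'a::real_normed_vector \<Rightarrow> real"
  assumes "\<And>k. f k differentiable (at x)"
  shows "(\<lambda>y. \<chi> k. f k y) differentiable (at x)"
  unfolding vec_as_sum using assms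
  by (intro differentiable_sum differentiable_scaleR) auto

lemma differentiable_det:
  fixes F :: "'a::real_normed_vector \<Rightarrow> real^'m::finite^'m"
  assumes "\<And>i j. (\<lambda>y. F y $ i $ j) differentiable (at x)"
  shows "(\<lambda>y. det (F y)) differentiable (at x)"
  unfolding det_def
proof (rule differentiable_sum)
  show "finite {p. p permutes (UNIV::'m set)}" by (simp add: finite_permutations)
  show "\<forall>p\<in>{p. p permutes UNIV}. (\<lambda>y. of_int (sign p) * (\<Prod>i\<in>UNIV. F y $ i $ p i)) differentiable (at x)"
    using assms by (auto intro!: differentiable_mult differentiable_prod')
qed

lemma differentiable_components:
  fixes f :: "'a::real_normed_vector \<Rightarrow> real^'m::finite"
  assumes "\<And>k. (\<lambda>y. f y $ k) differentiable (at x)"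
  shows "f differentiable (at x)"
proof -
  have "f = (\<lambda>y. \<chi> k. f y $ k)" by simp
  then show ?thesis using differentiable_vec[of "\<lambda>k y. f y $ k", OF assms] by simp
qed



context
  fixes I :: "'a set" and \<beta> :: "'m::finite \<Rightarrow> 'a"
    and Mrow :: "real^'n::finite \<Rightarrow> 'a \<Rightarrow> 'm \<Rightarrow> real" and svec :: "real^'n \<Rightarrow> 'm \<Rightarrow> real"
  assumes finI: "finite I" and injb: "inj \<beta>" and rngb: "range \<beta> \<subseteq> I"
    and dM: "\<And>\<alpha> r x. (\<lambda>x. Mrow x \<alpha> r) differentiable (at x)"
    and ds: "\<And>r x. (\<lambda>x. svec x r) differentiable (at x)"
    and dim: "CARD('n) < CARD('m)"
begin

definition Mb :: "real^'n \<Rightarrow> real^'m^'m" where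
  "Mb x = (\<chi> r col. Mrow x (\<beta> col) r)"

definition resid :: "real^'n \<Rightarrow> ('a \<Rightarrow> real) \<Rightarrow> real" where
  "resid x c = (\<Sum>r\<in>UNIV. \<bar>(\<Sum>\<alpha>\<in>I. c \<alpha> * Mrow x \<alpha> r) - svec x r\<bar>)"

definition En :: "nat \<Rightarrow> ('a \<Rightarrow> real) set" where
  "En n = {c \<in> PiE I (\<lambda>_. UNIV). \<exists>x. norm x \<le> real n \<and> 1 / real (Suc n) \<le> \<bar>det (Mb x)\<bar> \<and> resid x c = 0}"

lemma cont_Mrow: "continuous_on UNIV (\<lambda>x. Mrow x \<alpha> r)"
  using dM by (intro differentiable_imp_continuous_on differentiable_at_imp_differentiable_on) auto

lemma cont_svec: "continuous_on UNIV (\<lambda>x. svec x r)"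
  using ds by (intro differentiable_imp_continuous_on differentiable_at_imp_differentiable_on) auto

lemma diff_det: "(\<lambda>x. det (Mb x)) differentiable (at x)"
  unfolding Mb_def by (rule differentiable_det) (simp add: dM)

lemma cont_det: "continuous_on UNIV (\<lambda>x. det (Mb x))"
  using diff_det by (intro differentiable_imp_continuous_on differentiable_at_imp_differentiable_on) auto

lemma cont_resid: "continuous_on UNIV (\<lambda>x. resid x c)"
  unfolding resid_def
  by (intro continuous_intros cont_Mrow cont_svec)

lemma resid_nonneg: "resid x c \<ge> 0"
  unfolding resid_def by (intro sum_nonneg) auto

lemma resid_zero_iff: "resid x c = 0 \<longleftrightarrow> (\<forall>r. (\<Sum>\<alpha>\<in>I. c \<alpha> * Mrow x \<alpha> r) = svec x r)"
  unfolding resid_def by (subst sum_nonneg_eq_0_iff) auto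

lemma resid_meas: "(\<lambda>c. resid x c) \<in> borel_measurable (PiM I (\<lambda>_. lborel))"
  unfolding resid_def using finI by measurable

lemma En_sets: "En n \<in> sets (PiM I (\<lambda>_. lborel))"
proof -
  let ?M = "PiM I (\<lambda>_. lborel)"
  obtain Q :: "(real^'n) set" where Q: "countable Q" "\<And>U. open U \<Longrightarrow> U \<noteq> {} \<Longrightarrow> \<exists>y\<in>Q. y \<in> U"
    using countable_dense_exists by blast
  have Qne: "Q \<noteq> {}" using Q(2)[of UNIV] by auto
  define Qf where "Qf = from_nat_into Q"
  have rQ: "range Qf = Q" unfolding Qf_def using Q(1) Qne by simp
  define P where "P k j \<longleftrightarrow> norm (Qf j) < real n + 1 / real (Suc k) \<and>
      1 / real (Suc n) - 1 / real (Suc k) < \<bar>det (Mb (Qf j))\<bar>" for k j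
  have eq: "En n = {c \<in> space ?M. \<forall>k. \<exists>j. P k j \<and> resid (Qf j) c < 1 / real (Suc k)}"
  proof (intro equalityI subsetI)
    fix c assume c: "c \<in> En n"
    then obtain x0 where x0: "norm x0 \<le> real n" "1 / real (Suc n) \<le> \<bar>det (Mb x0)\<bar>" "resid x0 c = 0"
      by (auto simp: En_def)
    have "\<exists>j. P k j \<and> resid (Qf j) c < 1 / real (Suc k)" for k
    proof -
      define U where "U = {q. norm q < real n + 1 / real (Suc k)} \<inter>
         {q. 1 / real (Suc n) - 1 / real (Suc k) < \<bar>det (Mb q)\<bar>} \<inter> {q. resid q c < 1 / real (Suc k)}"
      have "open U" unfolding U_def
        by (intro open_Int open_Collect_less continuous_intros cont_det cont_resid)
      moreover have "x0 \<in> U"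
      proof -
        have h: "0 < 1 / real (Suc k)" by simp
        show ?thesis unfolding U_def
          by (intro IntI CollectI) (use x0 h in linarith)+
      qed
      ultimately obtain y where "y \<in> Q" "y \<in> U" using Q(2) by blast
      then obtain j where "Qf j = y" using rQ by blast
      then show ?thesis using \<open>y \<in> U\<close> by (auto simp: U_def P_def)
    qed
    then show "c \<in> {c \<in> space ?M. \<forall>k. \<exists>j. P k j \<and> resid (Qf j) c < 1 / real (Suc k)}"
      using c by (auto simp: En_def space_PiM)
  next
    fix c assume c: "c \<in> {c \<in> space ?M. \<forall>k. \<exists>j. P k j \<and> resid (Qf j) c < 1 / real (Suc k)}"
    then have "\<forall>k. \<exists>j. P k j \<and> resid (Qf j) c < 1 / real (Suc k)" by blast
    from choice[OF this] obtain jj where jj0: "\<forall>k. P k (jj k) \<and> resid (Qf (jj k)) c < 1 / real (Suc k)"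
      by blast
    have jj: "P k (jj k) \<and> resid (Qf (jj k)) c < 1 / real (Suc k)" for k using jj0 by blast
    define q where "q k = Qf (jj k)" for k
    have qb: "q k \<in> cball 0 (real n + 1)" for k
    proof -
      have h: "1 / real (Suc k) \<le> 1" by (simp add: divide_le_eq)
      have h1: "norm (q k) < real n + 1 / real (Suc k)" using jj[of k] unfolding q_def P_def by blast
      show ?thesis unfolding mem_cball_0 using h h1 by linarith
    qed
    obtain l r where l: "l \<in> cball 0 (real n + 1)" and r: "strict_mono r" and lim: "(q \<circ> r) \<longlonglongrightarrow> l"
      using seq_compactE[OF compact_imp_seq_compact[OF compact_cball, of 0 "real n + 1"], of q] qb by blast
    have inv0: "(\<lambda>k. 1 / real (Suc (r k))) \<longlonglongrightarrow> 0"
    proof -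
      have "(\<lambda>k. 1 / real (Suc k)) \<longlonglongrightarrow> (0::real)"
        using LIMSEQ_inverse_real_of_nat by (simp add: inverse_eq_divide)
      then show ?thesis using LIMSEQ_subseq_LIMSEQ[OF _ r] by (simp add: comp_def)
    qed
    have limf: "(\<lambda>k. f (q (r k))) \<longlonglongrightarrow> f l" if "continuous_on UNIV f" for f :: "real^'n \<Rightarrow> real"
      using continuous_on_tendsto_compose[OF that lim[unfolded comp_def]] by simp
    have "norm l \<le> real n"
    proof (rule LIMSEQ_le[OF limf[of norm]])
      show "continuous_on UNIV (norm :: real^'n \<Rightarrow> real)" by (intro continuous_intros)
      show "(\<lambda>k. real n + 1 / real (Suc (r k))) \<longlonglongrightarrow> real n"
        using tendsto_add[OF tendsto_const inv0] by simp
      show "\<exists>N. \<forall>k\<ge>N. norm (q (r k)) \<le> real n + 1 / real (Suc (r k))"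
        using jj by (auto simp: q_def P_def less_imp_le)
    qed
    moreover have "1 / real (Suc n) \<le> \<bar>det (Mb l)\<bar>"
    proof (rule LIMSEQ_le[OF _ limf[of "\<lambda>x. \<bar>det (Mb x)\<bar>"]])
      show "continuous_on UNIV (\<lambda>x. \<bar>det (Mb x)\<bar>)" by (intro continuous_intros cont_det)
      show "(\<lambda>k. 1 / real (Suc n) - 1 / real (Suc (r k))) \<longlonglongrightarrow> 1 / real (Suc n)"
        using tendsto_diff[OF tendsto_const inv0] by simp
      show "\<exists>N. \<forall>k\<ge>N. 1 / real (Suc n) - 1 / real (Suc (r k)) \<le> \<bar>det (Mb (q (r k)))\<bar>"
        using jj by (auto simp: q_def P_def less_imp_le)
    qed
    moreover have "resid l c = 0"
    proof -
      have "resid l c \<le> 0"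
      proof (rule LIMSEQ_le[OF limf[of "\<lambda>x. resid x c"] inv0])
        show "continuous_on UNIV (\<lambda>x. resid x c)" by (rule cont_resid)
        show "\<exists>N. \<forall>k\<ge>N. resid (q (r k)) c \<le> 1 / real (Suc (r k))"
          using jj by (auto simp: q_def less_imp_le)
      qed
      then show ?thesis using resid_nonneg[of l c] by simp
    qed
    ultimately show "c \<in> En n" using c by (auto simp: En_def space_PiM)
  qed
  have set_eq: "{c \<in> space ?M. \<forall>k. \<exists>j. P k j \<and> resid (Qf j) c < 1 / real (Suc k)}
     = (\<Inter>k. \<Union>j. (if P k j then (\<lambda>c. resid (Qf j) c) -` {..< 1 / real (Suc k)} \<inter> space ?M else {}))"
    by auto
  have "(\<lambda>c. resid (Qf j) c) -` {..< 1 / real (Suc k)} \<inter> space ?M \<in> sets ?M" for j k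
    by (rule measurable_sets[OF resid_meas]) simp
  then have A: "\<And>j k. (if P k j then (\<lambda>c. resid (Qf j) c) -` {..< 1 / real (Suc k)} \<inter> space ?M else {}) \<in> sets ?M"
    by simp
  have "(\<Inter>k. \<Union>j. (if P k j then (\<lambda>c. resid (Qf j) c) -` {..< 1 / real (Suc k)} \<inter> space ?M else {})) \<in> sets ?M"
    by (intro sets.countable_INT sets.countable_UN image_subsetI A) simp
  then show ?thesis unfolding eq set_eq .
qed

lemma fiber_null:
  fixes y :: "'a \<Rightarrow> real"
  assumes F: "F \<in> sets (PiM (range \<beta>) (\<lambda>_. lborel))"
    and Fsub: "\<And>u. u \<in> F \<Longrightarrow> merge (range \<beta>) (I - range \<beta>) (u, y) \<in> En n"
  shows "emeasure (PiM (range \<beta>) (\<lambda>_. lborel)) F = 0"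
proof -
  let ?J = "range \<beta>" and ?R = "I - range \<beta>"
  let ?T = "\<lambda>v::real^'m. \<lambda>\<alpha>\<in>?J. v $ inv \<beta> \<alpha>"
  have Tm: "?T \<in> measurable lborel (PiM ?J (\<lambda>_. lborel))"
    by (intro measurable_restrict) (auto intro!: borel_measurable_continuous_onI continuous_intros)
  define w where "w x = (\<chi> r. svec x r - (\<Sum>\<alpha>\<in>?R. y \<alpha> * Mrow x \<alpha> r))" for x
  define g where "g x = (\<chi> k. det (\<chi> i j. if j = k then w x $ i else Mb x $ i $ j) / det (Mb x))" for x
  define S where "S = {x. det (Mb x) \<noteq> 0}"
  have dw: "(\<lambda>x. w x $ i) differentiable (at x)" for i x
    unfolding w_def using finI
    by (auto intro!: differentiable_diff differentiable_sum differentiable_mult ds dM)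
  have dg: "g differentiable (at x)" if "x \<in> S" for x
    unfolding g_def
  proof (intro differentiable_vec differentiable_divide diff_det)
    fix k
    show "(\<lambda>y. det (\<chi> i j. if j = k then w y $ i else Mb y $ i $ j)) differentiable (at x)"
    proof (rule differentiable_det)
      fix i j
      show "(\<lambda>y. (\<chi> i j. if j = k then w y $ i else Mb y $ i $ j) $ i $ j) differentiable (at x)"
        by (cases "j = k") (simp_all add: Mb_def dw dM)
    qed
    show "det (Mb x) \<noteq> 0" using that by (simp add: S_def)
  qed
  have negl: "negligible (g ` S)"
    by (rule negligible_differentiable_image_lowdim)
       (use dim dg in \<open>auto intro!: differentiable_at_imp_differentiable_on\<close>)
  have sub: "?T -` F \<subseteq> g ` S"
  proof
    fix v assume "v \<in> ?T -` F"
    then have "?T v \<in> F" by simp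
    then have "merge ?J ?R (?T v, y) \<in> En n" by (rule Fsub)
    then obtain x where x: "1 / real (Suc n) \<le> \<bar>det (Mb x)\<bar>"
        "resid x (merge ?J ?R (?T v, y)) = 0"
      by (auto simp: En_def)
    have det0: "det (Mb x) \<noteq> 0"
    proof
      assume "det (Mb x) = 0"
      then show False using x(1) by simp
    qed
    have eqs: "(\<Sum>\<alpha>\<in>I. merge ?J ?R (?T v, y) \<alpha> * Mrow x \<alpha> r) = svec x r" for r
      using x(2) resid_zero_iff by blast
    have "Mb x *v v = w x"
    proof (unfold vec_eq_iff, intro allI)
      fix r
      have IJR: "I = ?J \<union> ?R" using rngb by auto
      have "(\<Sum>\<alpha>\<in>I. merge ?J ?R (?T v, y) \<alpha> * Mrow x \<alpha> r)
          = (\<Sum>\<alpha>\<in>?J. merge ?J ?R (?T v, y) \<alpha> * Mrow x \<alpha> r) + (\<Sum>\<alpha>\<in>?R. merge ?J ?R (?T v, y) \<alpha> * Mrow x \<alpha> r)"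
        by (subst IJR, rule sum.union_disjoint) (use finI in auto)
      also have "(\<Sum>\<alpha>\<in>?J. merge ?J ?R (?T v, y) \<alpha> * Mrow x \<alpha> r) = (\<Sum>\<alpha>\<in>?J. v $ inv \<beta> \<alpha> * Mrow x \<alpha> r)"
        by (intro sum.cong) (auto simp: merge_def)
      also have "\<dots> = (\<Sum>col\<in>UNIV. v $ col * Mrow x (\<beta> col) r)"
        using sum.reindex[OF injb, of "\<lambda>\<alpha>. v $ inv \<beta> \<alpha> * Mrow x \<alpha> r"] injb by (simp add: comp_def)
      also have "(\<Sum>\<alpha>\<in>?R. merge ?J ?R (?T v, y) \<alpha> * Mrow x \<alpha> r) = (\<Sum>\<alpha>\<in>?R. y \<alpha> * Mrow x \<alpha> r)"
        by (intro sum.cong) (auto simp: merge_def)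
      finally have "(\<Sum>col\<in>UNIV. v $ col * Mrow x (\<beta> col) r) = svec x r - (\<Sum>\<alpha>\<in>?R. y \<alpha> * Mrow x \<alpha> r)"
        using eqs[of r] by linarith
      then show "(Mb x *v v) $ r = w x $ r"
        by (simp add: matrix_vector_mult_def Mb_def w_def mult.commute)
    qed
    then have "v = g x" unfolding g_def using cramer[OF det0] by blast
    then show "v \<in> g ` S" using det0 by (auto simp: S_def)
  qed
  have Tpre: "?T -` F \<in> sets lborel"
    using measurable_sets[OF Tm F] by simp
  have "?T -` F \<in> null_sets lebesgue"
    using negligible_subset[OF negl sub] by (simp add: negligible_iff_null_sets)
  then have null: "?T -` F \<in> null_sets lborel"
    using null_sets_completion_iff[OF Tpre] by simp
  have "emeasure (PiM ?J (\<lambda>_. lborel)) F = emeasure (distr lborel (PiM ?J (\<lambda>_. lborel)) ?T) F"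
    by (simp add: distr_T[OF injb])
  also have "\<dots> = emeasure lborel (?T -` F \<inter> space lborel)"
    by (rule emeasure_distr[OF Tm F])
  also have "\<dots> = 0" using null_setsD1[OF null] by simp
  finally show ?thesis .
qed

lemma En_null: "emeasure (PiM I (\<lambda>_. lborel)) (En n) = 0"
proof -
  let ?J = "range \<beta>" and ?R = "I - range \<beta>"
  let ?MJ = "PiM ?J (\<lambda>_. lborel :: real measure)" and ?MR = "PiM ?R (\<lambda>_. lborel :: real measure)"
  have IJR: "?J \<union> ?R = I" using rngb by auto
  have finR: "finite ?R" using finI by simp
  interpret PS: product_sigma_finite "\<lambda>_. lborel :: real measure" by standard
  interpret PJ: finite_product_sigma_finite "\<lambda>_. lborel :: real measure" ?J by standard simp
  interpret PR: finite_product_sigma_finite "\<lambda>_. lborel :: real measure" ?R by standard (rule finR)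
  interpret PP: pair_sigma_finite ?MJ ?MR by standard
  have mergeD: "distr (?MJ \<Otimes>\<^sub>M ?MR) (PiM I (\<lambda>_. lborel)) (merge ?J ?R) = PiM I (\<lambda>_. lborel)"
    using PS.distr_merge[of ?J ?R] finR IJR by simp
  have Em: "En n \<in> sets (PiM I (\<lambda>_. lborel))" by (rule En_sets)
  have mm: "merge ?J ?R \<in> measurable (?MJ \<Otimes>\<^sub>M ?MR) (PiM I (\<lambda>_. lborel))"
    using measurable_merge[of ?J ?R "\<lambda>_. lborel :: real measure"] IJR by simp
  define E' where "E' = merge ?J ?R -` En n \<inter> space (?MJ \<Otimes>\<^sub>M ?MR)"
  have E'm: "E' \<in> sets (?MJ \<Otimes>\<^sub>M ?MR)" unfolding E'_def by (rule measurable_sets[OF mm Em])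
  have "emeasure (PiM I (\<lambda>_. lborel)) (En n) = emeasure (distr (?MJ \<Otimes>\<^sub>M ?MR) (PiM I (\<lambda>_. lborel)) (merge ?J ?R)) (En n)"
    by (simp add: mergeD)
  also have "\<dots> = emeasure (?MJ \<Otimes>\<^sub>M ?MR) E'"
    unfolding E'_def by (rule emeasure_distr[OF mm Em])
  also have "\<dots> = (\<integral>\<^sup>+y. emeasure ?MJ ((\<lambda>x. (x, y)) -` E') \<partial>?MR)"
    by (rule PP.emeasure_pair_measure_alt2[OF E'm])
  also have "\<dots> = (\<integral>\<^sup>+y. 0 \<partial>?MR)"
  proof (rule nn_integral_cong)
    fix y assume y: "y \<in> space ?MR"
    have "(\<lambda>x. (x, y)) -` E' = (\<lambda>x. (x, y)) -` E' \<inter> space ?MJ"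
      using sets.sets_into_space[OF E'm] by (auto simp: space_pair_measure)
    also have "\<dots> \<in> sets ?MJ"
      by (rule measurable_sets[OF measurable_Pair2'[OF y] E'm])
    finally have Fm: "(\<lambda>x. (x, y)) -` E' \<in> sets ?MJ" .
    show "emeasure ?MJ ((\<lambda>x. (x, y)) -` E') = 0"
      by (rule fiber_null[OF Fm]) (auto simp: E'_def)
  qed
  also have "\<dots> = 0" by simp
  finally show ?thesis .
qed

lemma bad_null:
  "\<exists>N \<in> null_sets (PiM I (\<lambda>_. lborel)).
     {c \<in> PiE I (\<lambda>_. UNIV). \<exists>x. det (Mb x) \<noteq> 0 \<and> (\<forall>r. (\<Sum>\<alpha>\<in>I. c \<alpha> * Mrow x \<alpha> r) = svec x r)} \<subseteq> N"
proof (intro bexI)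
  show "(\<Union>n. En n) \<in> null_sets (PiM I (\<lambda>_. lborel))"
    using En_sets En_null by (intro null_sets_UN) (auto simp: null_sets_def)
  show "{c \<in> PiE I (\<lambda>_. UNIV). \<exists>x. det (Mb x) \<noteq> 0 \<and> (\<forall>r. (\<Sum>\<alpha>\<in>I. c \<alpha> * Mrow x \<alpha> r) = svec x r)} \<subseteq> (\<Union>n. En n)"
  proof safe
    fix c x assume c: "c \<in> PiE I (\<lambda>_. UNIV)" and d: "det (Mb x) \<noteq> 0"
      and eq: "\<forall>r. (\<Sum>\<alpha>\<in>I. c \<alpha> * Mrow x \<alpha> r) = svec x r"
    obtain n1 :: nat where n1: "norm x \<le> real n1" using real_arch_simple by blast
    obtain n2 :: nat where n2: "1 / \<bar>det (Mb x)\<bar> \<le> real n2" using real_arch_simple by blast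
    define n where "n = max n1 n2"
    have "norm x \<le> real n" using n1 by (simp add: n_def)
    moreover have "1 / real (Suc n) \<le> \<bar>det (Mb x)\<bar>"
    proof -
      have "1 / \<bar>det (Mb x)\<bar> \<le> real (Suc n)" using n2 by (simp add: n_def)
      then show ?thesis using d by (simp add: divide_le_eq mult.commute)
    qed
    moreover have "resid x c = 0" using eq resid_zero_iff by blast
    ultimately have "c \<in> En n" using c by (auto simp: En_def)
    then show "c \<in> (\<Union>n. En n)" by blast
  qed
qed

lemma bad_null':
  "\<exists>N \<in> null_sets (PiM I (\<lambda>_. lborel)).
     {c \<in> PiE I (\<lambda>_. UNIV). \<exists>x. det (\<chi> r col. Mrow x (\<beta> col) r) \<noteq> 0 \<and> (\<forall>r. (\<Sum>\<alpha>\<in>I. c \<alpha> * Mrow x \<alpha> r) = svec x r)} \<subseteq> N"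
  using bad_null unfolding Mb_def .

end



primrec Yseq :: "(real^'n::finite \<Rightarrow> real^'n) \<Rightarrow> 'n \<Rightarrow> real^'n \<Rightarrow> nat \<Rightarrow> real^'n" where
  "Yseq \<phi> i1 x 0 = x"
| "Yseq \<phi> i1 x (Suc k) = \<phi> (Yseq \<phi> i1 x k) + (x $ i1 - \<phi> (Yseq \<phi> i1 x k) $ i1) *\<^sub>R axis i1 1"

lemma diff_nth:
  fixes f :: "'a::real_normed_vector \<Rightarrow> real^'n::finite"
  shows "f differentiable (at x) \<Longrightarrow> (\<lambda>y. f y $ i) differentiable (at x)"
proof -
  assume "f differentiable (at x)"
  moreover have "(\<lambda>v. v $ i) differentiable (at (f x))"
    by (rule bounded_linear_imp_differentiable) (rule bounded_linear_vec_nth)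
  ultimately show ?thesis using differentiable_chain_at[of f x "\<lambda>v. v $ i"] by (simp add: comp_def)
qed

lemma diff_Yseq:
  assumes "\<And>x. \<phi> differentiable (at x)"
  shows "(\<lambda>x. Yseq \<phi> i1 x k) differentiable (at x)"
proof (induction k)
  case 0 then show ?case by simp
next
  case (Suc k)
  have a: "(\<lambda>x. \<phi> (Yseq \<phi> i1 x k)) differentiable (at x)"
    using differentiable_chain_at[OF Suc assms] by (simp add: comp_def)
  have b: "(\<lambda>x. x $ i1) differentiable (at x)"
    using diff_nth[of "\<lambda>x. x" x i1] by simp
  show ?case
    using a b diff_nth[OF a, of i1]
    by (simp add: differentiable_add differentiable_scaleR differentiable_diff)
qed

lemma diff_monom: "(\<lambda>x. monom \<alpha> (f x)) differentiable (at x)" if "f differentiable (at x)"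
  for f :: "'a::real_normed_vector \<Rightarrow> real^'n::finite"
  unfolding monom_def using diff_nth[OF that]
  by (intro differentiable_prod' differentiable_power) auto

lemma phi_c_nth: "phi_c \<phi> i1 D c y $ i1 = \<phi> y $ i1 + (\<Sum>\<alpha>\<in>multi_idx D. c \<alpha> * monom \<alpha> y)"
  by (simp add: phi_c_def)

lemma orbit_Y:
  assumes h: "\<forall>k\<le>n. (phi_c \<phi> i1 D c ^^ k) x $ i1 = x $ i1"
  shows "k \<le> n \<Longrightarrow> (phi_c \<phi> i1 D c ^^ k) x = Yseq \<phi> i1 x k"
proof (induction k)
  case 0 then show ?case by simp
next
  case (Suc k)
  let ?f = "phi_c \<phi> i1 D c"
  have IH: "(?f ^^ k) x = Yseq \<phi> i1 x k" using Suc by simp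
  have S: "(?f ^^ Suc k) x = ?f (Yseq \<phi> i1 x k)" using IH by simp
  have "(?f ^^ Suc k) x $ i1 = x $ i1" using h Suc.prems by blast
  then have "\<phi> (Yseq \<phi> i1 x k) $ i1 + (\<Sum>\<alpha>\<in>multi_idx D. c \<alpha> * monom \<alpha> (Yseq \<phi> i1 x k)) = x $ i1"
    unfolding S by (simp only: phi_c_nth)
  then have e: "(\<Sum>\<alpha>\<in>multi_idx D. c \<alpha> * monom \<alpha> (Yseq \<phi> i1 x k)) = x $ i1 - \<phi> (Yseq \<phi> i1 x k) $ i1"
    by linarith
  show ?case unfolding S by (simp only: phi_c_def e Yseq.simps)
qed

lemma orbit_eq:
  assumes h: "\<forall>k\<le>n. (phi_c \<phi> i1 D c ^^ k) x $ i1 = x $ i1" and k: "k < n"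
  shows "(\<Sum>\<alpha>\<in>multi_idx D. c \<alpha> * monom \<alpha> (Yseq \<phi> i1 x k)) = x $ i1 - \<phi> (Yseq \<phi> i1 x k) $ i1"
proof -
  let ?f = "phi_c \<phi> i1 D c"
  have IH: "(?f ^^ k) x = Yseq \<phi> i1 x k" using orbit_Y[OF h] k by simp
  have S: "(?f ^^ Suc k) x = ?f (Yseq \<phi> i1 x k)" using IH by simp
  have "(?f ^^ Suc k) x $ i1 = x $ i1" using h Suc_leI[OF k] by blast
  then have "\<phi> (Yseq \<phi> i1 x k) $ i1 + (\<Sum>\<alpha>\<in>multi_idx D. c \<alpha> * monom \<alpha> (Yseq \<phi> i1 x k)) = x $ i1"
    unfolding S by (simp only: phi_c_nth)
  then show ?thesis by linarith
qed



theorem lemma15: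
  fixes \<phi> :: "real^'n::finite \<Rightarrow> real^'n"
    and i1 :: 'n
    and D m :: nat
    and r rp a0 \<delta> :: real
    and \<xi> :: "nat \<Rightarrow> (('n \<Rightarrow> nat) \<Rightarrow> real) \<Rightarrow> real^'n"
  defines "I \<equiv> multi_idx D :: ('n \<Rightarrow> nat) set"
    and "K \<equiv> cball (0::real^'n) r"
    and "Kp \<equiv> cball (0::real^'n) rp"
    and "Cl \<equiv> {c \<in> cspace (multi_idx D). cnorm (multi_idx D) c \<le> a0}"
  assumes D_ge: "D \<ge> 2 * CARD('n) + 2"
    and phi_diffeo: "Ck_diffeo 1 \<phi>"
    and K_ball: "0 < r" "r < rp"
    and phi_K: "\<forall>x\<in>K. \<forall>j<D. (\<phi> ^^ j) x \<in> Kp"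
    and a0_pos: "a0 > 0"
    and phic_K: "\<forall>c\<in>Cl. \<forall>x\<in>K. \<forall>j<D. (phi_c \<phi> i1 D c ^^ j) x \<in> Kp"
    and C3: "\<forall>c\<in>Cl. Ck_diffeo 3 (phi_c \<phi> i1 D c)"
    and fixpts: "\<forall>c\<in>Cl. {x. phi_c \<phi> i1 D c x = x} = (\<lambda>i. \<xi> i c) ` {1..m}
                        \<and> inj_on (\<lambda>i. \<xi> i c) {1..m}"
    and no_per: "\<forall>c\<in>Cl. \<forall>x k. 1 \<le> k \<and> k < 2 * D \<and> (phi_c \<phi> i1 D c ^^ k) x = x
                        \<longrightarrow> phi_c \<phi> i1 D c x = x"
    and hyp: "\<forall>c\<in>Cl. \<forall>i\<in>{1..m}. hyperbolic_fp (phi_c \<phi> i1 D c) (\<xi> i c)"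
    and proj_dist: "\<forall>c\<in>Cl. \<forall>i\<in>{1..m}. \<forall>j\<in>{1..m}. i \<noteq> j \<longrightarrow> \<xi> i c $ i1 \<noteq> \<xi> j c $ i1"
    and immersive: "\<forall>c\<in>Cl. \<forall>i\<in>{1..m}.
                      immersive_at D (\<lambda>j y. ((phi_c \<phi> i1 D c ^^ j) y) $ i1) (\<xi> i c)"
    and delta: "0 < \<delta>" "ereal (3 * \<delta>) < Delta_min {1..m} \<xi> Cl K"
  shows "(\<forall>a\<in>cball_open I (czero I) a0. lebesgue_point I (A1 \<phi> i1 D a0 m \<xi> K \<delta>) a)
         \<and> rel_prob I (A1 \<phi> i1 D a0 m \<xi> K \<delta>) (cball_open I (czero I) a0) = 1"
proof -
  have finI: "finite I" unfolding I_def by (rule finite_multi_idx)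
  have Ine: "I \<noteq> {}" unfolding I_def using zero_multi_idx by blast
  let ?d = "CARD('n)"
  obtain \<rho> :: "'n option \<Rightarrow> nat" where \<rho>: "bij_betw \<rho> UNIV {0..<CARD('n option)}"
    using ex_bij_betw_finite_nat[of "UNIV :: 'n option set"] by auto
  have inj\<rho>: "inj \<rho>" using \<rho> by (simp add: bij_betw_def)
  have \<rho>le: "\<rho> r \<le> ?d" for r
  proof -
    have "\<rho> r \<in> {0..<CARD('n option)}" using \<rho> by (auto simp: bij_betw_def)
    then show ?thesis by (simp add: card_UNIV_option)
  qed
  have dphi: "\<phi> differentiable (at x)" for x
  proof (rule differentiable_components)
    fix k
    have "Ck 1 (\<lambda>x. \<phi> x $ k)" using phi_diffeo by (simp add: Ck_diffeo_def Ck_map_def)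
    then obtain dg where "\<forall>x. ((\<lambda>x. \<phi> x $ k) has_derivative (\<lambda>h. \<Sum>i\<in>UNIV. h $ i * dg i x)) (at x)"
      by auto
    then show "(\<lambda>y. \<phi> y $ k) differentiable (at x)" by (auto intro: differentiableI)
  qed
  define Mrow where "Mrow x \<alpha> r = monom \<alpha> (Yseq \<phi> i1 x (\<rho> r))" for x \<alpha> r
  define svec where "svec x r = x $ i1 - \<phi> (Yseq \<phi> i1 x (\<rho> r)) $ i1" for x r
  have dM: "(\<lambda>x. Mrow x \<alpha> r) differentiable (at x)" for \<alpha> r x
    unfolding Mrow_def by (intro diff_monom diff_Yseq dphi)
  have ds: "(\<lambda>x. svec x r) differentiable (at x)" for r x
    unfolding svec_def
    by (intro differentiable_diff diff_nth differentiable_chain_at[of _ x \<phi>, unfolded comp_def]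
        diff_Yseq dphi differentiable_ident)
  define BadB where "BadB \<beta> = {c \<in> PiE I (\<lambda>_. UNIV). \<exists>x. det (\<chi> r col. Mrow x (\<beta> col) r) \<noteq> 0 \<and>
       (\<forall>r. (\<Sum>\<alpha>\<in>I. c \<alpha> * Mrow x \<alpha> r) = svec x r)}" for \<beta> :: "'n option \<Rightarrow> ('n \<Rightarrow> nat)"
  define Bset where "Bset = {\<beta> :: 'n option \<Rightarrow> ('n \<Rightarrow> nat). inj \<beta> \<and> range \<beta> \<subseteq> I}"
  have "\<forall>\<beta>\<in>Bset. \<exists>N \<in> null_sets (PiM I (\<lambda>_. lborel)). BadB \<beta> \<subseteq> N"
  proof
    fix \<beta> assume "\<beta> \<in> Bset"
    then have b: "inj \<beta>" "range \<beta> \<subseteq> I" by (auto simp: Bset_def)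
    show "\<exists>N \<in> null_sets (PiM I (\<lambda>_. lborel)). BadB \<beta> \<subseteq> N"
      unfolding BadB_def by (rule bad_null'[OF finI b dM ds]) simp
  qed
  then obtain NN where NN: "\<And>\<beta>. \<beta> \<in> Bset \<Longrightarrow> NN \<beta> \<in> null_sets (PiM I (\<lambda>_. lborel)) \<and> BadB \<beta> \<subseteq> NN \<beta>"
    by metis
  define N where "N = (\<Union>\<beta>\<in>Bset. NN \<beta>)"
  have Nnull: "N \<in> null_sets (PiM I (\<lambda>_. lborel))"
    unfolding N_def using NN by (intro null_sets_UN') (auto intro: countableI_type)
  let ?A = "A1 \<phi> i1 D a0 m \<xi> K \<delta>"
  have A_sub: "?A \<subseteq> cball_open I (czero I) a0"
    by (auto simp: A1_def cball_open_def cnorm_czero I_def)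
  have bad: "cball_open I (czero I) a0 - ?A \<subseteq> N"
  proof
    fix c assume c: "c \<in> cball_open I (czero I) a0 - ?A"
    have cs: "c \<in> cspace I" and cn: "cnorm I c < a0"
      using c by (auto simp: cball_open_def cnorm_czero)
    have cCl: "c \<in> Cl" using cs cn by (simp add: Cl_def I_def)
    let ?f = "phi_c \<phi> i1 D c"
    obtain j x1 where j: "j \<in> {1..m}" and x1K: "x1 \<in> K"
      and far: "\<forall>i\<in>{1..m}. norm (x1 - \<xi> i c) \<ge> 3 * \<delta>"
      and dm: "delay_map ?f i1 D (\<xi> j c) = delay_map ?f i1 D x1"
      using c cs cn by (auto simp: A1_def I_def)
    have fixp: "?f (\<xi> j c) = \<xi> j c" using fixpts cCl j by blast
    have fixk: "(?f ^^ k) (\<xi> j c) = \<xi> j c" for k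
      by (induction k) (simp_all add: fixp)
    have Dpos: "D > 0" using D_ge by simp
    have comp: "(?f ^^ k) x1 $ i1 = \<xi> j c $ i1" if "k < D" for k
    proof -
      have "map (\<lambda>k. (?f ^^ k) (\<xi> j c) $ i1) [0..<D] = map (\<lambda>k. (?f ^^ k) x1 $ i1) [0..<D]"
        using dm by (simp add: delay_map_def)
      then have "(?f ^^ k) (\<xi> j c) $ i1 = (?f ^^ k) x1 $ i1" using that
        by (simp add: map_eq_conv)
      then show ?thesis by (simp add: fixk)
    qed
    have h: "\<forall>k\<le>Suc ?d. (?f ^^ k) x1 $ i1 = x1 $ i1"
    proof (intro allI impI)
      fix k assume "k \<le> Suc ?d"
      then have "k < D" using D_ge by simp
      then show "(?f ^^ k) x1 $ i1 = x1 $ i1" using comp[of k] comp[of 0] Dpos by simp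
    qed
    have injf: "inj ?f" using C3 cCl by (auto simp: Ck_diffeo_def bij_def)
    have notfix: "?f x1 \<noteq> x1"
    proof
      assume "?f x1 = x1"
      then have "x1 \<in> (\<lambda>i. \<xi> i c) ` {1..m}" using fixpts cCl by blast
      then obtain i where "i \<in> {1..m}" "x1 = \<xi> i c" by blast
      then show False using far delta(1) by force
    qed
    have distinct: "k1 = k2" if k: "k1 \<le> ?d" "k2 \<le> ?d" and eqY: "Yseq \<phi> i1 x1 k1 = Yseq \<phi> i1 x1 k2" for k1 k2
    proof (rule ccontr)
      assume ne: "k1 \<noteq> k2"
      have orb: "(?f ^^ k1) x1 = (?f ^^ k2) x1"
        using orbit_Y[OF h, of k1] orbit_Y[OF h, of k2] k eqY by simp
      have gen: False if a: "a < b" "b \<le> ?d" "(?f ^^ a) x1 = (?f ^^ b) x1" for a b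
      proof -
        define p where "p = b - a"
        have p: "1 \<le> p" "p < 2 * D" using a D_ge by (auto simp: p_def)
        have "(?f ^^ p) ((?f ^^ a) x1) = (?f ^^ (p + a)) x1" by (simp add: funpow_add)
        also have "p + a = b" using a by (simp add: p_def)
        finally have "(?f ^^ p) ((?f ^^ a) x1) = (?f ^^ a) x1" using a by simp
        then have "?f ((?f ^^ a) x1) = (?f ^^ a) x1" using no_per cCl p by blast
        then have "(?f ^^ a) (?f x1) = (?f ^^ a) x1" by (simp add: funpow_swap1)
        then have "?f x1 = x1" using inj_fn[OF injf, of a] by (auto dest: injD)
        then show False using notfix by simp
      qed
      show False
      proof (cases "k1 < k2")
        case True then show ?thesis using gen[of k1 k2] k orb by simp
      next
        case False then have "k2 < k1" using ne by simp
        then show ?thesis using gen[of k2 k1] k orb by simp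
      qed
    qed
    define z where "z r = Yseq \<phi> i1 x1 (\<rho> r)" for r
    have injz: "inj z"
    proof (rule injI)
      fix r s assume "z r = z s"
      then have "\<rho> r = \<rho> s" using distinct[of "\<rho> r" "\<rho> s"] \<rho>le by (simp add: z_def)
      then show "r = s" using inj\<rho> by (auto dest: injD)
    qed
    have deg: "CARD('n option) - 1 \<le> 2 * D - 1" using D_ge by (simp add: card_UNIV_option)
    obtain \<beta> :: "'n option \<Rightarrow> ('n \<Rightarrow> nat)" where \<beta>: "inj \<beta>" "range \<beta> \<subseteq> multi_idx D"
      and det: "det (\<chi> r col. monom (\<beta> col) (z r) :: real^'n option^'n option) \<noteq> 0"
      using interp_det[OF injz deg] by blast
    have bB: "\<beta> \<in> Bset" using \<beta> by (simp add: Bset_def I_def)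
    have "c \<in> BadB \<beta>"
      unfolding BadB_def
    proof (intro CollectI conjI exI)
      show "c \<in> PiE I (\<lambda>_. UNIV)" using cs by (simp add: cspace_def)
      show "det (\<chi> r col. Mrow x1 (\<beta> col) r) \<noteq> 0" using det by (simp add: Mrow_def z_def)
      show "\<forall>r. (\<Sum>\<alpha>\<in>I. c \<alpha> * Mrow x1 \<alpha> r) = svec x1 r"
      proof
        fix r
        have "\<rho> r < Suc ?d" using \<rho>le[of r] by simp
        from orbit_eq[OF h this] show "(\<Sum>\<alpha>\<in>I. c \<alpha> * Mrow x1 \<alpha> r) = svec x1 r"
          by (simp add: Mrow_def svec_def I_def)
      qed
    qed
    then show "c \<in> N" using NN[OF bB] bB by (auto simp: N_def)
  qed
  show ?thesis by (rule conclusion_from_null[OF finI Ine a0_pos A_sub bad Nnull])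
qed


end
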